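(* Let $q$ be a prime power and $k\ge3$, $u\ge2$, $h\ge1$ integers. Let $U_1,\dots,U_h$ be $u$-dimensional subspaces of $\mathbf F_q^k$ with $U_i\cap U_j=\{0\}$ for $i\ne j$, and assume $q^k-q^{k-1}>h(q^u-1)$. Let $U$ be the set of nonzero vectors of $\mathbf F_q^k$ not in $U_1\cup\dots\cup U_h$, let $\widetilde G$ be a matrix whose columns consist of exactly one representative of each class $\{\lambda\mathbf v:\lambda\in\mathbf F_q^*\}$, $\mathbf v\in U$, and let $\mathbf C$ be the linear code with generator matrix $\widetilde G$. Suppose $\mathbf C$ has parameters $\big[\frac{(q^k-1)-h(q^u-1)}{q-1},k,d=q^{k-1}-hq^{u-1}\big]_q$. If $i_h+u>\sum_{i=1}^{k-u}\lfloor h/q^i\rfloor$, then $\mathbf C$ is distance optimal.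
   Context: For a positive integer $h$ with $q$-adic expansion $h=h_{m-1}q^{m-1}+\dots+h_0$ ($0\le h_i<q$), $i_h$ denotes the least index $i\ge0$ with $h_i>0$. A linear $[n,k,d]_q$ code is distance optimal if no linear $[n,k,d+1]_q$ code exists. *)

theory Defs
  imports Complex_Main "HOL-Library.Function_Algebras" "HOL-Library.Cardinality"
begin

text \<open>Vectors over a finite field 'a are modelled as functions nat => 'a;
  the space F_q^n is the set of those vanishing at all indices >= n.
  Scalar multiplication is pointwise.\<close>

definition fscale :: "'a::field \<Rightarrow> (nat \<Rightarrow> 'a) \<Rightarrow> (nat \<Rightarrow> 'a)" where
  "fscale c v = (\<lambda>i. c * v i)"

lemma vector_space_fscale: "vector_space (fscale :: 'a::field \<Rightarrow> _)"
  by unfold_locales (auto simp: fscale_def fun_eq_iff algebra_simps)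

definition vecs :: "nat \<Rightarrow> (nat \<Rightarrow> 'a::field) set" where
  "vecs n = {v. \<forall>i\<ge>n. v i = 0}"

definition is_subspace_of :: "(nat \<Rightarrow> 'a::field) set \<Rightarrow> nat \<Rightarrow> bool" where
  "is_subspace_of V n \<longleftrightarrow> V \<subseteq> vecs n \<and> Modules.module.subspace fscale V"

definition vdim :: "(nat \<Rightarrow> 'a::field) set \<Rightarrow> nat" where
  "vdim V = Vector_Spaces.vector_space.dim fscale V"

definition hweight :: "(nat \<Rightarrow> 'a::zero) \<Rightarrow> nat" where
  "hweight v = card {i. v i \<noteq> 0}"

definition min_dist :: "(nat \<Rightarrow> 'a::zero) set \<Rightarrow> nat" where
  "min_dist C = Min {hweight c | c. c \<in> C \<and> c \<noteq> 0}"

definition lin_code :: "nat \<Rightarrow> nat \<Rightarrow> (nat \<Rightarrow> 'a::field) set \<Rightarrow> bool" where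
  "lin_code n k C \<longleftrightarrow> is_subspace_of C n \<and> vdim C = k"

definition lin_code_nkd :: "nat \<Rightarrow> nat \<Rightarrow> nat \<Rightarrow> (nat \<Rightarrow> 'a::field) set \<Rightarrow> bool" where
  "lin_code_nkd n k d C \<longleftrightarrow> lin_code n k C \<and> min_dist C = d"

definition distance_optimal :: "nat \<Rightarrow> nat \<Rightarrow> nat \<Rightarrow> (nat \<Rightarrow> 'a::field) set \<Rightarrow> bool" where
  "distance_optimal n k d C \<longleftrightarrow> lin_code_nkd n k d C \<and>
     \<not> (\<exists>C' :: (nat \<Rightarrow> 'a) set. lin_code n k C' \<and> min_dist C' \<ge> d + 1)"

text \<open>Code generated by the k x N matrix whose j-th column is gs!j:
  codewords (x . g_0, ..., x . g_{N-1}) for messages x in F_q^k.\<close>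
definition gen_code :: "nat \<Rightarrow> (nat \<Rightarrow> 'a::field) list \<Rightarrow> (nat \<Rightarrow> 'a) set" where
  "gen_code k gs = {(\<lambda>j. if j < length gs then (\<Sum>i<k. x i * (gs ! j) i) else 0) | x. x \<in> vecs k}"

text \<open>i_h: least index of a nonzero digit in the q-adic expansion of h.\<close>
definition least_digit_index :: "nat \<Rightarrow> nat \<Rightarrow> nat" where
  "least_digit_index q h = (LEAST i. (h div q ^ i) mod q \<noteq> 0)"

end

theory Submission
  imports Defs "HOL-Library.FuncSet"
begin


definition cdiv :: "nat \<Rightarrow> nat \<Rightarrow> nat" where "cdiv a b = (a + b - 1) div b"

lemma cdiv_le_iff: "b > 0 \<Longrightarrow> cdiv a b \<le> x \<longleftrightarrow> a \<le> b * x"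
proof -
  assume b: "b > 0"
  have "cdiv a b \<le> x \<longleftrightarrow> (a + b - 1) div b < Suc x" unfolding cdiv_def by linarith
  also have "\<dots> \<longleftrightarrow> a + b - 1 < Suc x * b" using b by (rule div_less_iff_less_mult)
  also have "\<dots> \<longleftrightarrow> a \<le> b * x" using b by (auto simp: algebra_simps)
  finally show ?thesis .
qed

lemma cdiv_1[simp]: "cdiv a 1 = a" by (simp add: cdiv_def)
lemma cdiv_Suc0[simp]: "cdiv a (Suc 0) = a" by (simp add: cdiv_def)

lemma cdiv_cdiv: assumes "q > 0" "Q > 0" shows "cdiv (cdiv a q) Q = cdiv a (q*Q)"
proof (rule antisym)
  have "cdiv a (q*Q) \<le> cdiv a (q*Q)" by simp
  then have "a \<le> q*(Q*cdiv a (q*Q))" using assms cdiv_le_iff[of "q*Q" a "cdiv a (q*Q)"] by (simp add: mult.assoc)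
  then show "cdiv (cdiv a q) Q \<le> cdiv a (q*Q)" using assms cdiv_le_iff by metis
next
  have "cdiv (cdiv a q) Q \<le> cdiv (cdiv a q) Q" by simp
  then have "a \<le> (q*Q)*cdiv (cdiv a q) Q" using assms cdiv_le_iff by (metis mult.assoc)
  then show "cdiv a (q*Q) \<le> cdiv (cdiv a q) Q" using assms cdiv_le_iff by simp
qed

lemma card_field_ge2: "CARD('a::{finite,field}) \<ge> 2"
proof -
  have "card {0::'a, 1} = 2" by simp
  moreover have "card {0::'a, 1} \<le> CARD('a)" by (rule card_mono) auto
  ultimately show ?thesis by simp
qed

lemma fscale_apply: "fscale a x i = a * x i" by (simp add: fscale_def)

lemma card_sum_swap:
  fixes S :: "'b set" and L :: "'c set"
  assumes "finite S" "finite L"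
  shows "(\<Sum>a\<in>L. card {i\<in>S. P a i}) = (\<Sum>i\<in>S. card {a\<in>L. P a i})"
proof -
  have "(\<Sum>a\<in>L. card {i\<in>S. P a i}) = (\<Sum>a\<in>L. \<Sum>i\<in>S. if P a i then 1 else 0)"
    using assms by (simp add: sum.If_cases Int_def conj_commute)
  also have "\<dots> = (\<Sum>i\<in>S. \<Sum>a\<in>L. if P a i then 1 else 0)" by (rule sum.swap)
  also have "\<dots> = (\<Sum>i\<in>S. card {a\<in>L. P a i})"
    using assms by (simp add: sum.If_cases Int_def conj_commute)
  finally show ?thesis .
qed

lemma griesmer:
  fixes C :: "(nat \<Rightarrow> 'a::{finite,field}) set" and T :: "nat set"
  assumes "finite T" "finite C"
    and "\<forall>c\<in>C. \<forall>i. i \<notin> T \<longrightarrow> c i = 0"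
    and "\<forall>x\<in>C. \<forall>y\<in>C. x + y \<in> C" "\<forall>a. \<forall>x\<in>C. fscale a x \<in> C"
    and "card C \<ge> CARD('a) ^ m"
    and "\<forall>c\<in>C. c \<noteq> 0 \<longrightarrow> hweight c \<ge> d"
  shows "card T \<ge> (\<Sum>i<m. cdiv d (CARD('a) ^ i))"
  using assms
proof (induction m arbitrary: T C d)
  case 0
  then show ?case by simp
next
  case (Suc m)
  note fscale_apply[simp]
  define q where "q = CARD('a)"
  have q2: "q \<ge> 2" unfolding q_def by (rule card_field_ge2)
  note fin = Suc.prems(1,2) and supp = Suc.prems(3) and cadd = Suc.prems(4)
    and csc = Suc.prems(5) and ccard = Suc.prems(6) and wd = Suc.prems(7)
  have qq: "q \<le> q * q ^ m" using q2 by simp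
  have C2: "card C \<ge> 2" using ccard q2 qq unfolding q_def[symmetric] power_Suc by linarith
  have "C - {0} \<noteq> {}"
  proof
    assume "C - {0} = {}"
    then have "C \<subseteq> {0}" by auto
    then have "card C \<le> 1" using card_mono[of "{0}" C] by simp
    then show False using C2 by simp
  qed
  define W where "W = hweight ` (C - {0})"
  have finW: "finite W" "W \<noteq> {}" using fin \<open>C - {0} \<noteq> {}\<close> unfolding W_def by auto
  define w0 where "w0 = Min W"
  obtain c where c: "c \<in> C" "c \<noteq> 0" "hweight c = w0"
  proof -
    have "w0 \<in> W" unfolding w0_def using Min_in[OF finW] .
    then show ?thesis using that unfolding W_def by blast
  qed
  have minw: "\<And>x. x \<in> C \<Longrightarrow> x \<noteq> 0 \<Longrightarrow> w0 \<le> hweight x"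
    unfolding w0_def W_def using finW by (auto intro!: Min_le simp: W_def)
  have w0d: "d \<le> w0" using wd c by metis
  define S where "S = {i. c i \<noteq> 0}"
  have ST: "S \<subseteq> T" using supp c(1) unfolding S_def by auto
  have finS: "finite S" using ST fin finite_subset by blast
  have cardS: "card S = w0" using c unfolding S_def hweight_def by simp
  have Sne: "S \<noteq> {}" using c(2) unfolding S_def by (auto simp: fun_eq_iff)
  define T' where "T' = T - S"
  define r where "r = (\<lambda>x::nat \<Rightarrow> 'a. \<lambda>i. if i \<in> T' then x i else 0)"
  define C' where "C' = r ` C"
  have r_add: "r (x + y) = r x + r y" for x y unfolding r_def by (auto simp: fun_eq_iff)
  have r_sc: "r (fscale a x) = fscale a (r x)" for a x unfolding r_def by (auto simp: fun_eq_iff)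
  have rc: "r c = 0" unfolding r_def T'_def S_def by (auto simp: fun_eq_iff)
  have addneg: "x + fscale (-a) y \<in> C" if "x \<in> C" "y \<in> C" for x y a
    using that cadd csc by blast
  have ker: "\<exists>a. z = fscale a c" if z: "z \<in> C" "r z = 0" for z
  proof -
    have zS: "z i = 0" if "i \<notin> S" for i
    proof (cases "i \<in> T")
      case True
      then have "i \<in> T'" using that unfolding T'_def by auto
      then show ?thesis using fun_cong[OF z(2), of i] unfolding r_def by simp
    next
      case False then show ?thesis using supp z(1) by auto
    qed
    obtain i0 where i0: "i0 \<in> S" using Sne by auto
    define a where "a = z i0 / c i0"
    define y where "y = z + fscale (-a) c"
    have yC: "y \<in> C" unfolding y_def using addneg z(1) c(1) by blast
    have "{i. y i \<noteq> 0} \<subseteq> S - {i0}"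
      using i0 zS unfolding y_def a_def S_def by auto
    then have "hweight y < w0" unfolding hweight_def cardS[symmetric]
      using finS i0 by (meson card_mono card_Diff1_less finite_Diff le_less_trans)
    then have "y = 0" using minw yC by force
    then have "z = fscale a c" unfolding y_def by (auto simp: fun_eq_iff)
    then show ?thesis by blast
  qed
  have fiber: "card {x\<in>C. r x = y} \<le> q" if yC: "y \<in> C'" for y
  proof -
    obtain x0 where x0: "x0 \<in> C" "r x0 = y" using yC unfolding C'_def by auto
    have "{x\<in>C. r x = y} \<subseteq> (\<lambda>a. x0 + fscale a c) ` UNIV"
    proof
      fix x assume x: "x \<in> {x\<in>C. r x = y}"
      define z where "z = x + fscale (-1) x0"
      have "z \<in> C" unfolding z_def using addneg x x0 by blast
      moreover have "r z = 0" unfolding z_def r_add r_sc using x x0 by (auto simp: fun_eq_iff)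
      ultimately obtain a where "z = fscale a c" using ker by blast
      then have "x = x0 + fscale a c" unfolding z_def by (auto simp: fun_eq_iff algebra_simps)
      then show "x \<in> (\<lambda>a. x0 + fscale a c) ` UNIV" by blast
    qed
    then have "card {x\<in>C. r x = y} \<le> card ((\<lambda>a. x0 + fscale a c) ` (UNIV::'a set))"
      by (intro card_mono) auto
    also have "\<dots> \<le> q" unfolding q_def by (rule card_image_le) simp
    finally show ?thesis .
  qed
  have Ceq: "C = (\<Union>y\<in>C'. {x\<in>C. r x = y})" unfolding C'_def by auto
  have finC': "finite C'" unfolding C'_def using fin by simp
  have "card C \<le> (\<Sum>y\<in>C'. card {x\<in>C. r x = y})"
    by (subst Ceq) (rule card_UN_le[OF finC'])
  also have "\<dots> \<le> (\<Sum>y\<in>C'. q)" by (rule sum_mono) (use fiber in auto)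
  finally have cardCC': "card C \<le> q * card C'" by (simp add: mult.commute)
  have "q * q ^ m \<le> card C" using ccard unfolding q_def by simp
  then have "q * q ^ m \<le> q * card C'" using cardCC' by linarith
  then have cardC': "card C' \<ge> q ^ m" using q2 by simp
  have wt: "d \<le> q * hweight y" if y: "y \<in> C'" "y \<noteq> 0" for y
  proof -
    obtain x where x: "x \<in> C" "r x = y" using y unfolding C'_def by auto
    define P where "P = (\<lambda>a i. x i \<noteq> a * c i)"
    have split: "hweight (x + fscale (-a) c) = hweight y + card {i\<in>S. P a i}" for a
    proof -
      have "{i. (x + fscale (-a) c) i \<noteq> 0} = {i. y i \<noteq> 0} \<union> {i\<in>S. P a i}"
      proof (rule set_eqI)
        fix i
        have cT: "c i \<noteq> 0 \<Longrightarrow> i \<in> T" using supp c(1) by blast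
        have xT: "x i \<noteq> 0 \<Longrightarrow> i \<in> T" using supp x(1) by blast
        show "i \<in> {i. (x + fscale (-a) c) i \<noteq> 0} \<longleftrightarrow> i \<in> {i. y i \<noteq> 0} \<union> {i\<in>S. P a i}"
          unfolding x(2)[symmetric] r_def T'_def S_def P_def using cT xT by auto
      qed
      moreover have "{i. y i \<noteq> 0} \<inter> {i\<in>S. P a i} = {}"
        using x unfolding r_def T'_def by auto
      moreover have "finite {i. y i \<noteq> 0}"
        using supp x fin unfolding r_def T'_def by (auto intro: finite_subset[of _ T])
      ultimately show ?thesis unfolding hweight_def using finS
        by (simp add: card_Un_disjoint)
    qed
    have ge: "w0 \<le> hweight y + card {i\<in>S. P a i}" for a
    proof -
      have "x + fscale (-a) c \<noteq> 0"
      proof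
        assume "x + fscale (-a) c = 0"
        then have "x = fscale a c" by (auto simp: fun_eq_iff)
        then have "r x = fscale a (r c)" using r_sc by simp
        then have "r x = 0" using rc by (simp add: fun_eq_iff)
        then show False using x y by simp
      qed
      then show ?thesis using minw[OF addneg[OF x(1) c(1)]] split by simp
    qed
    have "q * w0 = (\<Sum>a\<in>(UNIV::'a set). w0)" unfolding q_def by simp
    also have "\<dots> \<le> (\<Sum>a\<in>(UNIV::'a set). hweight y + card {i\<in>S. P a i})"
      by (rule sum_mono) (use ge in auto)
    also have "\<dots> = q * hweight y + (\<Sum>a\<in>(UNIV::'a set). card {i\<in>S. P a i})"
      unfolding q_def by (simp add: sum.distrib)
    also have "(\<Sum>a\<in>(UNIV::'a set). card {i\<in>S. P a i}) = (\<Sum>i\<in>S. card {a\<in>(UNIV::'a set). P a i})"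
      by (rule card_sum_swap) (use finS in auto)
    also have "\<dots> = (\<Sum>i\<in>S. q - 1)"
    proof (rule sum.cong)
      fix i assume i: "i \<in> S"
      have "{a\<in>(UNIV::'a set). P a i} = UNIV - {x i / c i}"
        using i unfolding P_def S_def by (auto simp: field_simps)
      then show "card {a\<in>(UNIV::'a set). P a i} = q - 1" unfolding q_def by (simp add: card_Diff_singleton)
    qed simp
    also have "\<dots> = w0 * (q - 1)" using cardS by simp
    finally have "q * w0 \<le> q * hweight y + w0 * (q - 1)" .
    moreover have "w0 * (q - 1) + w0 = q * w0" using q2 by (cases q) (auto simp: algebra_simps)
    ultimately have "w0 \<le> q * hweight y" by linarith
    then show ?thesis using w0d by simp
  qed
  have IH: "card T' \<ge> (\<Sum>i<m. cdiv (cdiv d q) (q ^ i))"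
    unfolding q_def
  proof (rule Suc.IH)
    show "finite T'" using fin unfolding T'_def by simp
    show "finite C'" by (rule finC')
    show "\<forall>c\<in>C'. \<forall>i. i \<notin> T' \<longrightarrow> c i = 0" unfolding C'_def r_def by auto
    show "\<forall>x\<in>C'. \<forall>y\<in>C'. x + y \<in> C'"
    proof (intro ballI)
      fix x y assume "x \<in> C'" "y \<in> C'"
      then obtain x1 y1 where "x1 \<in> C" "y1 \<in> C" "x = r x1" "y = r y1" unfolding C'_def by auto
      then show "x + y \<in> C'" unfolding C'_def using cadd r_add[of x1 y1] by (metis imageI)
    qed
    show "\<forall>a. \<forall>x\<in>C'. fscale a x \<in> C'"
    proof (intro allI ballI)
      fix a x assume "x \<in> C'"
      then obtain x1 where "x1 \<in> C" "x = r x1" unfolding C'_def by auto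
      then show "fscale a x \<in> C'" unfolding C'_def using csc r_sc[of a x1] by (metis imageI)
    qed
    show "CARD('a) ^ m \<le> card C'" using cardC' unfolding q_def .
    show "\<forall>c\<in>C'. c \<noteq> 0 \<longrightarrow> cdiv d CARD('a) \<le> hweight c"
      using wt q2 cdiv_le_iff unfolding q_def by auto
  qed
  have "card T = card S + card T'" unfolding T'_def using ST fin finS
    by (metis card_Diff_subset add_diff_inverse_nat card_mono not_less_iff_gr_or_eq diff_less_mono2 le_add_diff_inverse)
  have "(\<Sum>i<Suc m. cdiv d (q ^ i)) = d + (\<Sum>i<m. cdiv d (q ^ Suc i))"
    by (subst sum.lessThan_Suc_shift) simp
  also have "\<dots> = d + (\<Sum>i<m. cdiv (cdiv d q) (q ^ i))"
    using q2 by (simp add: cdiv_cdiv)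
  also have "\<dots> \<le> card T"
    using IH w0d cardS \<open>card T = card S + card T'\<close> by linarith
  finally show ?case unfolding q_def .
qed

interpretation vs: vector_space fscale by (rule vector_space_fscale)

lemma finite_vecs: "finite (vecs n :: (nat \<Rightarrow> 'a::{finite,field}) set)"
proof -
  have "vecs n \<subseteq> (\<lambda>g i. if i < n then g i else 0) ` (PiE {..<n} (\<lambda>_. (UNIV::'a set)))"
  proof
    fix v :: "nat \<Rightarrow> 'a" assume v: "v \<in> vecs n"
    define g where "g = (\<lambda>i. if i < n then v i else undefined)"
    have "v = (\<lambda>i. if i < n then g i else 0)"
      using v unfolding vecs_def g_def by (auto simp: fun_eq_iff)
    moreover have "g \<in> PiE {..<n} (\<lambda>_. (UNIV::'a set))" unfolding g_def by (auto simp: PiE_def extensional_def)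
    ultimately show "v \<in> (\<lambda>g i. if i < n then g i else 0) ` (PiE {..<n} (\<lambda>_. (UNIV::'a set)))" by blast
  qed
  moreover have "finite (PiE {..<n} (\<lambda>_. (UNIV::'a set)))" by (intro finite_PiE) auto
  ultimately show ?thesis using finite_subset by blast
qed

lemma subspace_vecs: "vs.subspace (vecs n :: (nat \<Rightarrow> 'a::field) set)"
  unfolding vs.subspace_def vecs_def by (auto simp: fscale_apply)

lemma card_span_ge:
  fixes B :: "(nat \<Rightarrow> 'a::{finite,field}) set"
  assumes "finite B" "B \<subseteq> vecs n" "vs.independent B"
  shows "card (vs.span B) \<ge> CARD('a) ^ card B"
  using assms
proof (induction B rule: finite_induct)
  case empty
  then show ?case by (simp add: vs.span_empty)
next
  case (insert b B)
  have indB: "vs.independent B" and bB: "b \<notin> vs.span B"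
    using insert.prems(2) insert.hyps(2) vs.independent_insert[of b B] by auto
  have IH: "card (vs.span B) \<ge> CARD('a) ^ card B" using insert.IH insert.prems(1) indB by auto
  have sub: "vs.span (insert b B) \<subseteq> vecs n"
    using insert.prems(1) subspace_vecs by (intro vs.span_minimal) auto
  have fin: "finite (vs.span (insert b B))" using finite_subset[OF sub finite_vecs] .
  define f where "f = (\<lambda>(x, a). x + fscale a b)"
  have img: "f ` (vs.span B \<times> (UNIV::'a set)) \<subseteq> vs.span (insert b B)"
  proof
    fix y assume "y \<in> f ` (vs.span B \<times> (UNIV::'a set))"
    then obtain x a where xa: "x \<in> vs.span B" "y = x + fscale a b" unfolding f_def by auto
    have "x \<in> vs.span (insert b B)" using xa(1) vs.span_mono[of B "insert b B"] by auto
    moreover have "fscale a b \<in> vs.span (insert b B)"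
      by (intro vs.span_scale vs.span_base) simp
    ultimately show "y \<in> vs.span (insert b B)" using xa(2) vs.span_add by simp
  qed
  have inj: "inj_on f (vs.span B \<times> (UNIV::'a set))"
  proof (rule inj_onI)
    fix p p' assume p: "p \<in> vs.span B \<times> (UNIV::'a set)" "p' \<in> vs.span B \<times> (UNIV::'a set)"
      and eq: "f p = f p'"
    obtain x a x' a' where pp: "p = (x, a)" "p' = (x', a')" by (cases p, cases p') 
    have xs: "x \<in> vs.span B" "x' \<in> vs.span B" using p pp by auto
    have eq2: "x + fscale a b = x' + fscale a' b" using eq pp unfolding f_def by simp
    show "p = p'"
    proof (cases "a = a'")
      case True
      then have "x = x'" using eq2 by simp
      then show ?thesis using pp True by simp
    next
      case False
      have "fscale (inverse (a - a')) (x' - x) \<in> vs.span B"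
        using xs by (intro vs.span_scale vs.span_diff)
      moreover have "fscale (inverse (a - a')) (x' - x) = b"
      proof
        fix i
        have "x i + a * b i = x' i + a' * b i" using fun_cong[OF eq2, of i] by (simp add: fscale_apply)
        then have "(x' - x) i = (a - a') * b i" by (simp add: algebra_simps)
        moreover have "a - a' \<noteq> 0" using False by simp
        ultimately show "fscale (inverse (a - a')) (x' - x) i = b i"
          by (simp add: fscale_apply)
      qed
      ultimately show ?thesis using bB by simp
    qed
  qed
  have "CARD('a) ^ card (insert b B) = CARD('a) ^ card B * CARD('a)"
    using insert.hyps by simp
  also have "\<dots> \<le> card (vs.span B) * CARD('a)" using IH by simp
  also have "\<dots> = card (vs.span B \<times> (UNIV::'a set))" by (simp add: card_cartesian_product)
  also have "\<dots> = card (f ` (vs.span B \<times> (UNIV::'a set)))" using card_image[OF inj] by simp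
  also have "\<dots> \<le> card (vs.span (insert b B))" using card_mono[OF fin img] .
  finally show ?case .
qed

lemma lin_code_card:
  fixes C :: "(nat \<Rightarrow> 'a::{finite,field}) set"
  assumes "lin_code n k C" "k > 0"
  shows "finite C" "card C \<ge> CARD('a) ^ k" "vs.subspace C" "C \<subseteq> vecs n"
proof -
  have C: "C \<subseteq> vecs n" "vs.subspace C" "vs.dim C = k"
    using assms(1) unfolding lin_code_def is_subspace_of_def vdim_def by auto
  then show "vs.subspace C" "C \<subseteq> vecs n" by auto
  show finC: "finite C" using C(1) finite_vecs finite_subset by blast
  obtain B where B: "B \<subseteq> C" "vs.independent B" "C \<subseteq> vs.span B" "card B = vs.dim C"
    by (rule vs.basis_exists)
  have finB: "finite B" using B(4) C(3) assms(2) card_ge_0_finite by metis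
  have "vs.span B \<subseteq> C" using B(1) C(2) by (rule vs.span_minimal)
  then have "card (vs.span B) \<le> card C" using finC by (rule card_mono[rotated])
  moreover have "card (vs.span B) \<ge> CARD('a) ^ card B"
    using card_span_ge[OF finB _ B(2)] B(1) C(1) by blast
  ultimately show "card C \<ge> CARD('a) ^ k" using B(4) C(3) by simp
qed



lemma ldi_dvd: "j \<le> least_digit_index q h \<Longrightarrow> q ^ j dvd h"
proof (induction j)
  case 0 then show ?case by simp
next
  case (Suc j)
  then have j: "j < least_digit_index q h" by simp
  have "(h div q ^ j) mod q = 0" using not_less_Least[OF j[unfolded least_digit_index_def]] by simp
  then have "q dvd h div q ^ j" by (simp add: mod_eq_0_iff_dvd)
  then obtain c where c: "h div q ^ j = q * c" by blast
  have "q ^ j dvd h" using Suc j by simp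
  then have "h = q ^ j * (h div q ^ j)" by simp
  then have "h = q ^ Suc j * c" using c by (simp add: mult.assoc mult.commute mult.left_commute)
  then show ?case by (metis dvd_triv_left)
qed

lemma cdiv_L: "M > 0 \<Longrightarrow> P > 0 \<Longrightarrow> cdiv (X * M + 1) (M * P) = X div P + 1"
proof -
  assume M: "M > 0" and P: "P > 0"
  have "cdiv (X * M + 1) (M * P) = (M * (X + P)) div (M * P)"
    unfolding cdiv_def using M P by (simp add: algebra_simps)
  also have "\<dots> = (X + P) div P" using M by simp
  also have "\<dots> = X div P + 1" using P by simp
  finally show ?thesis .
qed

lemma geo_int: "(int q - 1) * (\<Sum>i<(n::nat). int q ^ i) = int q ^ n - 1"
  by (induction n) (auto simp: algebra_simps)

lemma sum_split_add: "(\<Sum>i<u + (e::nat). f i) = (\<Sum>i<u. f i) + (\<Sum>j<e. f (u + j))"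
  by (induction e) (auto simp: add.assoc)

lemma sum_shift1: "(\<Sum>i=1..e. f i) = (\<Sum>j<e. f (Suc j))"
  by (induction e) (auto simp: atLeastAtMostSuc_conv add.commute)

lemma term_bound:
  fixes Q P h :: nat
  assumes "Q > 0" "Q dvd P" "h \<le> P"
  shows "int ((P - h) div Q) \<ge> int (P div Q) - int (h div Q) - (if Q dvd h then 0 else 1)"
proof -
  define a where "a = h div Q"
  define b where "b = h mod Q"
  define R where "R = P div Q"
  have hab: "h = Q * a + b" unfolding a_def b_def by simp
  have PR: "P = Q * R" using assms(2) unfolding R_def by simp
  have bQ: "b < Q" unfolding b_def using assms(1) by simp
  define X where "X = int R - int a - (if Q dvd h then 0 else 1)"
  have "X * int Q \<le> int (P - h)"
  proof (cases "Q dvd h")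
    case True
    then have "b = 0" unfolding b_def by simp
    then show ?thesis using True assms(3) unfolding X_def PR hab by (simp add: algebra_simps of_nat_diff)
  next
    case False
    have "X * int Q = int Q * int R - int Q * int a - int Q" using False unfolding X_def by (simp add: algebra_simps)
    also have "\<dots> \<le> int Q * int R - int Q * int a - int b" using bQ by simp
    also have "\<dots> = int (P - h)" using assms(3) unfolding PR hab by (simp add: of_nat_diff algebra_simps)
    finally show ?thesis .
  qed
  then have "(X * int Q) div int Q \<le> int (P - h) div int Q"
    using assms(1) by (intro zdiv_mono1) auto
  then have "X \<le> int ((P - h) div Q)" using assms(1) by (simp add: zdiv_int)
  then show ?thesis unfolding X_def R_def a_def by simp
qed

lemma arith_main:
  fixes q k u h n :: nat
  assumes q2: "q \<ge> 2" and k: "k \<ge> 3" and u: "u \<ge> 2" and h: "h \<ge> 1"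
    and size: "q ^ k - q ^ (k - 1) > h * (q ^ u - 1)"
    and nle: "n * (q - 1) \<le> q ^ k - 1 - h * (q ^ u - 1)"
    and cond: "least_digit_index q h + u > (\<Sum>i=1..k-u. h div q ^ i)"
  shows "n < (\<Sum>i<k. cdiv (q ^ (k - 1) - h * q ^ (u - 1) + 1) (q ^ i))"
proof -
  define ih where "ih = least_digit_index q h"
  define F where "F = (\<Sum>i=1..k-u. h div q ^ i)"
  have q0: "q > 0" using q2 by simp
  have "u < k"
  proof (rule ccontr)
    assume "\<not> u < k"
    then have "q ^ k \<le> q ^ u" using q2 by (intro power_increasing) auto
    moreover have "q ^ k \<ge> 1" using q0 by simp
    moreover have "h * (q ^ u - 1) \<ge> q ^ u - 1" using h by simp
    moreover have "q ^ (k - 1) \<ge> 1" using q0 by simp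
    ultimately show False using size by linarith
  qed
  define e where "e = k - u"
  have ke: "k = u + e" "e \<ge> 1" using \<open>u < k\<close> unfolding e_def by auto
  have pk: "q ^ k = q ^ u * q ^ e" using ke by (simp add: power_add)
  have pk1: "q ^ (k - 1) = q ^ (u - 1) * q ^ e" using ke u by (simp add: power_add[symmetric])
  have pu: "q ^ u = q ^ (u - 1) * q" using u by (metis Suc_pred' le_trans one_le_numeral not_one_le_zero not_less power_Suc2 zero_less_iff_neq_zero)
  have hP: "h < q ^ e"
  proof (rule ccontr)
    assume "\<not> h < q ^ e"
    then have "h * (q ^ u - 1) \<ge> q ^ e * (q ^ u - 1)" by simp
    moreover have "q ^ e * (q ^ u - 1) \<ge> q ^ k - q ^ (k - 1)"
    proof -
      have "q ^ (u - 1) \<ge> 1" using q0 by simp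
      then have "q ^ u - 1 \<ge> q ^ u - q ^ (u - 1)" by simp
      then have "q ^ e * (q ^ u - 1) \<ge> q ^ e * (q ^ u - q ^ (u - 1))" by simp
      also have "q ^ e * (q ^ u - q ^ (u - 1)) = q ^ k - q ^ (k - 1)"
        unfolding pk pk1 by (simp add: diff_mult_distrib2 mult.commute)
      finally show ?thesis .
    qed
    ultimately show False using size by linarith
  qed
  have ihe: "ih < e"
  proof (rule ccontr)
    assume "\<not> ih < e"
    then have "q ^ e dvd h" using ldi_dvd[of e q h] unfolding ih_def by simp
    then have "q ^ e \<le> h" using h by (simp add: dvd_imp_le)
    then show False using hP by simp
  qed
  define D where "D = q ^ e - h"
  have dD: "q ^ (k - 1) - h * q ^ (u - 1) = D * q ^ (u - 1)"
    unfolding D_def pk1 by (simp add: diff_mult_distrib algebra_simps)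
  define a where "a = (\<lambda>i. cdiv (q ^ (k - 1) - h * q ^ (u - 1) + 1) (q ^ i))"
  have a1: "a i = q ^ (u - 1 - i) * D + 1" if "i < u" for i
  proof -
    have "q ^ (u - 1) = q ^ (u - 1 - i) * q ^ i" using that by (simp add: power_add[symmetric])
    then have "a i = cdiv ((q ^ (u - 1 - i) * D) * q ^ i + 1) (q ^ i * 1)"
      unfolding a_def dD by (simp add: algebra_simps)
    also have "\<dots> = q ^ (u - 1 - i) * D + 1" using q0 by (subst cdiv_L) auto
    finally show ?thesis .
  qed
  have a2: "a (u + j) = D div q ^ Suc j + 1" for j
  proof -
    have "u + j = (u - 1) + Suc j" using u by simp
    then have "q ^ (u + j) = q ^ (u - 1) * q ^ Suc j" by (metis power_add)
    then have "a (u + j) = cdiv (D * q ^ (u - 1) + 1) (q ^ (u - 1) * q ^ Suc j)"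
      unfolding a_def dD by simp
    also have "\<dots> = D div q ^ Suc j + 1" using q0 by (subst cdiv_L) auto
    finally show ?thesis .
  qed
  have tb: "int (D div q ^ Suc j) \<ge> int (q ^ (e - Suc j)) - int (h div q ^ Suc j) - (if ih \<le> j then 1 else 0)"
    if j: "j < e" for j
  proof -
    have "q ^ Suc j dvd q ^ e" using j by (intro le_imp_power_dvd) simp
    then have "int (D div q ^ Suc j) \<ge> int (q ^ e div q ^ Suc j) - int (h div q ^ Suc j)
        - (if q ^ Suc j dvd h then 0 else 1)"
      unfolding D_def using q0 hP by (intro term_bound) auto
    moreover have "q ^ e div q ^ Suc j = q ^ (e - Suc j)" using j q0 by (simp add: power_diff)
    moreover have "(if q ^ Suc j dvd h then 0 else 1) \<le> (if ih \<le> j then 1 else (0::int))"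
      using ldi_dvd[of "Suc j" q h] unfolding ih_def by auto
    ultimately show ?thesis by linarith
  qed
  have S1: "(\<Sum>i<u. a i) = D * (\<Sum>i<u. q ^ i) + u"
  proof -
    have "(\<Sum>i<u. a i) = (\<Sum>i<u. q ^ (u - Suc i) * D + 1)" using a1 by simp
    also have "\<dots> = (\<Sum>i<u. q ^ (u - Suc i)) * D + u"
      by (simp only: sum.distrib sum_distrib_right) simp
    also have "(\<Sum>i<u. q ^ (u - Suc i)) = (\<Sum>i<u. q ^ i)" by (rule sum.nat_diff_reindex)
    finally show ?thesis by simp
  qed
  have S2: "int (\<Sum>j<e. a (u + j)) \<ge> (\<Sum>j<e. int q ^ j) - int F + int e - (\<Sum>j<e. if ih \<le> j then 1 else 0)"
  proof -
    have "int (\<Sum>j<e. a (u + j)) = (\<Sum>j<e. int (D div q ^ Suc j) + 1)" using a2 by (simp add: add.commute)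
    also have "\<dots> \<ge> (\<Sum>j<e. int (q ^ (e - Suc j)) - int (h div q ^ Suc j) - (if ih \<le> j then 1 else 0) + 1)"
      by (rule sum_mono) (use tb in auto)
    finally have "int (\<Sum>j<e. a (u + j)) \<ge> (\<Sum>j<e. int (q ^ (e - Suc j))) - (\<Sum>j<e. int (h div q ^ Suc j))
        - (\<Sum>j<e. if ih \<le> j then 1 else 0) + int e"
      by (simp add: sum.distrib sum_subtractf)
    moreover have "(\<Sum>j<e. int (q ^ (e - Suc j))) = (\<Sum>j<e. int q ^ j)"
      using sum.nat_diff_reindex[of "\<lambda>j. int q ^ j" e] by simp
    moreover have "(\<Sum>j<e. int (h div q ^ Suc j)) = int F"
      unfolding F_def e_def[symmetric] sum_shift1 by simp
    ultimately show ?thesis by linarith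
  qed
  have cnt: "(\<Sum>j<e. if ih \<le> j then 1 else 0) = int (e - ih)"
  proof -
    have "(\<Sum>j<e. if ih \<le> j then 1 else (0::int)) = int (card {j\<in>{..<e}. ih \<le> j})"
      by (simp add: sum.If_cases Int_def conj_commute)
    also have "{j\<in>{..<e}. ih \<le> j} = {ih..<e}" by auto
    finally show ?thesis by simp
  qed
  have tot: "(\<Sum>i<k. a i) = (\<Sum>i<u. a i) + (\<Sum>j<e. a (u + j))"
    unfolding ke(1) by (rule sum_split_add)
  define Gu where "Gu = (\<Sum>i<u. int q ^ i)"
  define Ge where "Ge = (\<Sum>j<e. int q ^ j)"
  have gu: "(int q - 1) * Gu = int q ^ u - 1" unfolding Gu_def by (rule geo_int)
  have ge: "(int q - 1) * Ge = int q ^ e - 1" unfolding Ge_def by (rule geo_int)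
  define T where "T = int (\<Sum>i<k. a i)"
  have T: "T \<ge> int D * Gu + int u + Ge - int F + int ih"
    using S1 S2 cnt tot ihe unfolding T_def Gu_def Ge_def by (simp add: of_nat_diff)
  have condF0: "F + 1 \<le> ih + u" using cond unfolding ih_def F_def by simp
  have condF: "int ih + int u \<ge> int F + 1" using condF0 by linarith
  have Dint: "int D = int q ^ e - int h" unfolding D_def using hP by (simp add: of_nat_diff)
  have qk: "int q ^ k = int q ^ u * int q ^ e" using pk by (metis of_nat_mult of_nat_power)
  have nI: "int n * (int q - 1) \<le> int q ^ k - 1 - int h * (int q ^ u - 1)"
  proof -
    have "q ^ u \<ge> 1" "q ^ k \<ge> 1" using q0 by simp_all
    moreover have "h * (q ^ u - 1) \<le> q ^ k - 1" using size by linarith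
    ultimately have "int (q ^ k - 1 - h * (q ^ u - 1)) = int (q ^ k - 1) - int (h * (q ^ u - 1))"
      by (simp add: of_nat_diff)
    also have "int (h * (q ^ u - 1)) = int h * (int q ^ u - 1)" using \<open>q ^ u \<ge> 1\<close> by (simp add: of_nat_diff)
    also have "int (q ^ k - 1) = int q ^ k - 1" using \<open>q ^ k \<ge> 1\<close> by (simp add: of_nat_diff)
    finally have eq: "int (q ^ k - 1 - h * (q ^ u - 1)) = int q ^ k - 1 - int h * (int q ^ u - 1)" .
    have "int (n * (q - 1)) \<le> int (q ^ k - 1 - h * (q ^ u - 1))" using nle by (simp only: of_nat_le_iff)
    moreover have "int (q - 1) = int q - 1" using q0 by (simp add: of_nat_diff)
    then have "int (n * (q - 1)) = int n * (int q - 1)" by (simp only: of_nat_mult)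
    ultimately show ?thesis using eq by linarith
  qed
  have q1: "int q - 1 \<ge> 1" using q2 by simp
  have "(int q - 1) * T \<ge> (int q - 1) * (int D * Gu + int u + Ge - int F + int ih)"
    using T q1 by (intro mult_left_mono) auto
  also have "(int q - 1) * (int D * Gu + int u + Ge - int F + int ih)
      = int D * ((int q - 1) * Gu) + (int q - 1) * Ge + (int q - 1) * (int u + int ih - int F)"
    by (simp add: algebra_simps)
  also have "\<dots> = (int q ^ e - int h) * (int q ^ u - 1) + (int q ^ e - 1) + (int q - 1) * (int u + int ih - int F)"
    using gu ge Dint by simp
  also have "\<dots> = int q ^ k - 1 - int h * (int q ^ u - 1) + (int q - 1) * (int u + int ih - int F)"
    using qk by (simp add: algebra_simps)
  finally have "(int q - 1) * T \<ge> int q ^ k - 1 - int h * (int q ^ u - 1) + (int q - 1) * (int u + int ih - int F)" .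
  moreover have "(int q - 1) * (int u + int ih - int F) \<ge> (int q - 1) * 1"
    using condF q1 by (intro mult_left_mono) auto
  ultimately have "(int q - 1) * T > (int q - 1) * int n" using nI q1 by (simp add: algebra_simps) 
  then have "T > int n" using q1 by (simp add: mult_less_cancel_left)
  then have "n < (\<Sum>i<k. a i)" unfolding T_def by (simp only: of_nat_less_iff)
  then show ?thesis unfolding a_def .
qed


theorem theorem2p3:
  fixes Us :: "nat \<Rightarrow> (nat \<Rightarrow> 'a::{finite,field}) set"
    and gs :: "(nat \<Rightarrow> 'a) list"
    and q k u h :: nat
  assumes q_def: "q = CARD('a)"
    and k: "k \<ge> 3" and u: "u \<ge> 2" and h: "h \<ge> 1"
    and Us_sub: "\<forall>i\<in>{1..h}. is_subspace_of (Us i) k \<and> vdim (Us i) = u"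
    and Us_disj: "\<forall>i\<in>{1..h}. \<forall>j\<in>{1..h}. i \<noteq> j \<longrightarrow> Us i \<inter> Us j = {0}"
    and size: "q ^ k - q ^ (k - 1) > h * (q ^ u - 1)"
    and cols_in: "\<forall>g\<in>set gs. g \<in> vecs k - {0} - (\<Union>i\<in>{1..h}. Us i)"
    and cols_rep: "\<forall>v\<in>vecs k - {0} - (\<Union>i\<in>{1..h}. Us i).
                     \<exists>!j. j < length gs \<and> (\<exists>c. c \<noteq> 0 \<and> gs ! j = fscale c v)"
    and len: "length gs = ((q ^ k - 1) - h * (q ^ u - 1)) div (q - 1)"
    and params: "lin_code_nkd (length gs) k (q ^ (k - 1) - h * q ^ (u - 1)) (gen_code k gs)"
    and cond: "least_digit_index q h + u > (\<Sum>i=1..k-u. h div q ^ i)"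
  shows "distance_optimal (length gs) k (q ^ (k - 1) - h * q ^ (u - 1)) (gen_code k gs)"
  proof -
  define d where "d = q ^ (k - 1) - h * q ^ (u - 1)"
  define n where "n = length gs"
  have q2: "q \<ge> 2" using q_def card_field_ge2 by simp
  have k0: "k > 0" using k by simp
  have notex: "\<not> (\<exists>C' :: (nat \<Rightarrow> 'a) set. lin_code n k C' \<and> min_dist C' \<ge> d + 1)"
  proof
    assume "\<exists>C' :: (nat \<Rightarrow> 'a) set. lin_code n k C' \<and> min_dist C' \<ge> d + 1"
    then obtain C' :: "(nat \<Rightarrow> 'a) set" where C': "lin_code n k C'" "min_dist C' \<ge> d + 1" by blast
    note L = lin_code_card[OF C'(1) k0]
    have wts: "\<forall>c\<in>C'. c \<noteq> 0 \<longrightarrow> hweight c \<ge> d + 1"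
    proof (intro ballI impI)
      fix c assume c: "c \<in> C'" "c \<noteq> 0"
      have fin: "finite {hweight c | c. c \<in> C' \<and> c \<noteq> 0}"
        using L(1) by (intro finite_image_set) simp
      have "min_dist C' \<le> hweight c" unfolding min_dist_def
        by (rule Min_le[OF fin]) (use c in blast)
      then show "hweight c \<ge> d + 1" using C'(2) by simp
    qed
    have "card {..<n} \<ge> (\<Sum>i<k. cdiv (d + 1) (CARD('a) ^ i))"
    proof (rule griesmer)
      show "finite {..<n}" by simp
      show "finite C'" by (rule L(1))
      show "\<forall>c\<in>C'. \<forall>i. i \<notin> {..<n} \<longrightarrow> c i = 0" using L(4) unfolding vecs_def by auto
      show "\<forall>x\<in>C'. \<forall>y\<in>C'. x + y \<in> C'" using L(3) vs.subspace_add by blast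
      show "\<forall>a. \<forall>x\<in>C'. fscale a x \<in> C'" using L(3) vs.subspace_scale by blast
      show "CARD('a) ^ k \<le> card C'" by (rule L(2))
      show "\<forall>c\<in>C'. c \<noteq> 0 \<longrightarrow> d + 1 \<le> hweight c" by (rule wts)
    qed
    then have ge: "n \<ge> (\<Sum>i<k. cdiv (d + 1) (q ^ i))" using q_def by simp
    have nle: "n * (q - 1) \<le> q ^ k - 1 - h * (q ^ u - 1)"
      unfolding n_def len by (rule div_times_less_eq_dividend)
    have "n < (\<Sum>i<k. cdiv (q ^ (k - 1) - h * q ^ (u - 1) + 1) (q ^ i))"
      by (rule arith_main[OF q2 k u h size nle cond])
    then show False using ge unfolding d_def by simp
  qed
  show ?thesis unfolding distance_optimal_def using params notex unfolding d_def n_def by blast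
qed

end
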